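(* Let $A=(a_{ij})_{1\le i,j\le n}$ be a complex Nekrasov matrix, and let $k\in\{1,\dots,n\}$ be the smallest index such that $a_{kj}=0$ for all $j>k$. Then there exist real numbers $\epsilon_1,\dots,\epsilon_n$ satisfying $$\epsilon_i=0 \text{ for } i=1,\dots,k-1,\qquad 0<\epsilon_i<|a_{ii}|-h_i(A)\ \text{ and }\ \epsilon_i>\sum_{j=k}^{i-1}\frac{|a_{ij}|\,\epsilon_j}{|a_{jj}|}\ \text{ for } i=k,\dots,n$$ (the sum being empty for $i=k$), and for any such numbers the diagonal matrix $S=\mathrm{diag}(s_1,\dots,s_n)$ with $s_i:=\frac{h_i(A)+\epsilon_i}{|a_{ii}|}$ has positive diagonal entries and $AS$ is strictly diagonally dominant by rows.
   Context: For a complex $n\times n$ matrix $A=(a_{ij})$ with $a_{ii}\ne 0$ for all $i$, define recursively $h_1(A):=\sum_{j\ne 1}|a_{1j}|$ and $h_i(A):=\sum_{j=1}^{i-1}|a_{ij}|\frac{h_j(A)}{|a_{jj}|}+\sum_{j=i+1}^{n}|a_{ij}|$ for $i=2,\dots,n$. $A$ is a Nekrasov matrix if $|a_{ii}|>h_i(A)$ for all $i\in\{1,\dots,n\}$. A matrix $B=(b_{ij})$ is strictly diagonally dominant by rows (SDD) if $|b_{ii}|>\sum_{j\ne i}|b_{ij}|$ for all $i$. *)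

theory Defs
  imports Complex_Main
begin

text \<open>Matrices are n x n with 1-based indices i, j in {1..n}, represented as
  functions nat => nat => complex (entries outside the range are irrelevant).\<close>

fun nek_h :: "nat \<Rightarrow> (nat \<Rightarrow> nat \<Rightarrow> complex) \<Rightarrow> nat \<Rightarrow> real" where
  "nek_h n A i =
     (\<Sum>j\<in>{1..<i}. cmod (A i j) * nek_h n A j / cmod (A j j))
     + (\<Sum>j\<in>{i<..n}. cmod (A i j))"

definition nekrasov :: "nat \<Rightarrow> (nat \<Rightarrow> nat \<Rightarrow> complex) \<Rightarrow> bool" where
  "nekrasov n A \<longleftrightarrow> (\<forall>i\<in>{1..n}. A i i \<noteq> 0) \<and> (\<forall>i\<in>{1..n}. cmod (A i i) > nek_h n A i)"

definition sdd :: "nat \<Rightarrow> (nat \<Rightarrow> nat \<Rightarrow> 'a::real_normed_vector) \<Rightarrow> bool" where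
  "sdd n B \<longleftrightarrow> (\<forall>i\<in>{1..n}. norm (B i i) > (\<Sum>j\<in>{1..n}-{i}. norm (B i j)))"

end

theory Submission imports Defs begin

fun ee :: "(nat \<Rightarrow> nat \<Rightarrow> complex) \<Rightarrow> nat \<Rightarrow> nat \<Rightarrow> real" where
  "ee A k i = 1 + (\<Sum>j\<in>{k..<i}. cmod (A i j) * ee A k j / cmod (A j j))"
declare ee.simps[simp del] nek_h.simps[simp del]

lemma ee_ge: "ee A k i \<ge> 1"
proof (induction A k i rule: ee.induct)
  case (1 A k i)
  have "(\<Sum>j\<in>{k..<i}. cmod (A i j) * ee A k j / cmod (A j j)) \<ge> 0"
  proof (rule sum_nonneg)
    fix j assume j: "j \<in> {k..<i}"
    have "ee A k j \<ge> 0" using "1"[OF j] by linarith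
    then show "cmod (A i j) * ee A k j / cmod (A j j) \<ge> 0" by simp
  qed
  then show ?case by (subst ee.simps) linarith
qed

lemma h_nonneg: "nek_h n A i \<ge> 0"
proof (induction n A i rule: nek_h.induct)
  case (1 n A i)
  have "(\<Sum>j\<in>{1..<i}. cmod (A i j) * nek_h n A j / cmod (A j j)) \<ge> 0"
  proof (rule sum_nonneg)
    fix j assume j: "j \<in> {1..<i}"
    have "nek_h n A j \<ge> 0" using "1"[OF j] .
    then show "cmod (A i j) * nek_h n A j / cmod (A j j) \<ge> 0" by simp
  qed
  moreover have "(\<Sum>j\<in>{i<..n}. cmod (A i j)) \<ge> 0" by (intro sum_nonneg) auto
  ultimately show ?case by (subst nek_h.simps) linarith
qed

theorem theorem2p2:
  fixes n :: nat and A :: "nat \<Rightarrow> nat \<Rightarrow> complex" and k :: nat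
  assumes "n \<ge> 1"
    and "nekrasov n A"
    and "k = (LEAST k. 1 \<le> k \<and> k \<le> n \<and> (\<forall>j\<in>{k<..n}. A k j = 0))"
  shows "(\<exists>\<epsilon> :: nat \<Rightarrow> real.
            (\<forall>i\<in>{1..<k}. \<epsilon> i = 0) \<and>
            (\<forall>i\<in>{k..n}. 0 < \<epsilon> i \<and> \<epsilon> i < cmod (A i i) - nek_h n A i \<and>
                 \<epsilon> i > (\<Sum>j\<in>{k..<i}. cmod (A i j) * \<epsilon> j / cmod (A j j))))
       \<and> (\<forall>\<epsilon> :: nat \<Rightarrow> real.
            ((\<forall>i\<in>{1..<k}. \<epsilon> i = 0) \<and>
             (\<forall>i\<in>{k..n}. 0 < \<epsilon> i \<and> \<epsilon> i < cmod (A i i) - nek_h n A i \<and>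
                 \<epsilon> i > (\<Sum>j\<in>{k..<i}. cmod (A i j) * \<epsilon> j / cmod (A j j))))
            \<longrightarrow> (let s = (\<lambda>i. (nek_h n A i + \<epsilon> i) / cmod (A i i)) in
                 (\<forall>i\<in>{1..n}. s i > 0) \<and> sdd n (\<lambda>i j. A i j * complex_of_real (s j))))"
proof -
  define P where "P = (\<lambda>k. 1 \<le> k \<and> k \<le> n \<and> (\<forall>j\<in>{k<..n}. A k j = 0))"
  have Pn: "P n" using assms(1) by (simp add: P_def)
  have Pk: "P k" using LeastI[of P n, OF Pn] assms(3) by (simp add: P_def)
  have k1: "1 \<le> k" and kn: "k \<le> n" using Pk by (auto simp: P_def)
  have notP: "\<exists>j\<in>{i<..n}. A i j \<noteq> 0" if "1 \<le> i" "i < k" for i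
  proof -
    have "\<not> P i" using not_less_Least[of i P] that assms(3) by (simp add: P_def)
    then show ?thesis using that kn by (auto simp: P_def)
  qed
  have apos: "cmod (A i i) > 0" if "i \<in> {1..n}" for i using assms(2) that by (auto simp: nekrasov_def)
  have hlt: "nek_h n A i < cmod (A i i)" if "i \<in> {1..n}" for i using assms(2) that by (auto simp: nekrasov_def)
  define d where "d = (\<lambda>i. cmod (A i i) - nek_h n A i)"
  define e where "e = ee A k"
  have e_ge: "e i \<ge> 1" for i unfolding e_def by (rule ee_ge)
  have e_eq: "e i = 1 + (\<Sum>j\<in>{k..<i}. cmod (A i j) * e j / cmod (A j j))" for i
    unfolding e_def by (subst ee.simps) simp
  define t where "t = Min ((\<lambda>i. d i / (2 * e i)) ` {k..n})"
  have tpos: "t > 0" unfolding t_def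
  proof (subst Min_gr_iff)
    show "\<forall>a\<in>(\<lambda>i. d i / (2 * e i)) ` {k..n}. 0 < a"
    proof
      fix a assume "a \<in> (\<lambda>i. d i / (2 * e i)) ` {k..n}"
      then obtain i where i: "i \<in> {k..n}" "a = d i / (2 * e i)" by auto
      have "d i > 0" using hlt[of i] i k1 by (auto simp: d_def)
      moreover have "e i > 0" using e_ge[of i] by simp
      ultimately show "0 < a" using i by simp
    qed
  qed (use kn in auto)
  have tle: "t \<le> d i / (2 * e i)" if "i \<in> {k..n}" for i
    unfolding t_def using that by (intro Min_le) auto
  define \<epsilon> where "\<epsilon> = (\<lambda>i. if i < k then 0 else t * e i)"
  have ex: "(\<forall>i\<in>{1..<k}. \<epsilon> i = 0) \<and>
            (\<forall>i\<in>{k..n}. 0 < \<epsilon> i \<and> \<epsilon> i < cmod (A i i) - nek_h n A i \<and>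
                 \<epsilon> i > (\<Sum>j\<in>{k..<i}. cmod (A i j) * \<epsilon> j / cmod (A j j)))"
  proof (intro conjI ballI)
    fix i assume i: "i \<in> {1..<k}" then show "\<epsilon> i = 0" by (simp add: \<epsilon>_def)
  next
    fix i assume i: "i \<in> {k..n}"
    have ep: "\<epsilon> i = t * e i" using i by (simp add: \<epsilon>_def)
    have ei: "e i > 0" using e_ge[of i] by simp
    show "0 < \<epsilon> i" using ep tpos ei by simp
    have dpos: "d i > 0" using hlt[of i] i k1 by (auto simp: d_def)
    have "t * e i \<le> d i / (2 * e i) * e i" using tle[OF i] ei by (intro mult_right_mono) auto
    also have "\<dots> = d i / 2" using ei by (simp add: field_simps)
    finally show "\<epsilon> i < cmod (A i i) - nek_h n A i" using ep dpos by (simp add: d_def)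
    have "(\<Sum>j\<in>{k..<i}. cmod (A i j) * \<epsilon> j / cmod (A j j))
        = t * (\<Sum>j\<in>{k..<i}. cmod (A i j) * e j / cmod (A j j))"
      unfolding sum_distrib_left by (intro sum.cong) (auto simp: \<epsilon>_def)
    also have "\<dots> = t * (e i - 1)" using e_eq[of i] by simp
    also have "\<dots> < t * e i" using tpos by simp
    finally show "(\<Sum>j\<in>{k..<i}. cmod (A i j) * \<epsilon> j / cmod (A j j)) < \<epsilon> i" using ep by simp
  qed
  have all: "(let s = (\<lambda>i. (nek_h n A i + \<epsilon> i) / cmod (A i i)) in
                 (\<forall>i\<in>{1..n}. s i > 0) \<and> sdd n (\<lambda>i j. A i j * complex_of_real (s j)))"
    if H: "(\<forall>i\<in>{1..<k}. \<epsilon> i = 0) \<and>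
             (\<forall>i\<in>{k..n}. 0 < \<epsilon> i \<and> \<epsilon> i < cmod (A i i) - nek_h n A i \<and>
                 \<epsilon> i > (\<Sum>j\<in>{k..<i}. cmod (A i j) * \<epsilon> j / cmod (A j j)))" for \<epsilon>
  proof -
    define s where "s = (\<lambda>i. (nek_h n A i + \<epsilon> i) / cmod (A i i))"
    have Hk: "0 < \<epsilon> i \<and> \<epsilon> i < cmod (A i i) - nek_h n A i \<and>
                 \<epsilon> i > (\<Sum>j\<in>{k..<i}. cmod (A i j) * \<epsilon> j / cmod (A j j))"
      if "i \<in> {1..n}" "\<not> i < k" for i
    proof -
      have "i \<in> {k..n}" using that by auto
      then show ?thesis using H by blast
    qed
    have H0: "\<epsilon> i = 0" if "i \<in> {1..n}" "i < k" for i
      using H that by auto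
    have epn: "\<epsilon> i \<ge> 0" if "i \<in> {1..n}" for i
      using Hk[OF that] H0[OF that] by (cases "i < k") auto
    have eplt: "nek_h n A i + \<epsilon> i < cmod (A i i)" if "i \<in> {1..n}" for i
    proof (cases "i < k")
      case False
      then have "i \<in> {k..n}" using that by auto
      then show ?thesis using H by force
    qed (use H that hlt[OF that] in auto)
    have hpos: "nek_h n A i > 0" if hi: "i \<in> {1..n}" "i < k" for i
    proof -
      obtain j where j: "j \<in> {i<..n}" "A i j \<noteq> 0" using notP[of i] hi by auto
      have "(\<Sum>j\<in>{i<..n}. cmod (A i j)) > 0" using j by (intro sum_pos2[of _ j]) auto
      moreover have "(\<Sum>j\<in>{1..<i}. cmod (A i j) * nek_h n A j / cmod (A j j)) \<ge> 0"
        using h_nonneg by (intro sum_nonneg) simp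
      ultimately show ?thesis by (subst nek_h.simps) simp
    qed
    have spos: "s i > 0" if "i \<in> {1..n}" for i
    proof -
      have "nek_h n A i + \<epsilon> i > 0"
        using Hk[OF that] H0[OF that] hpos[OF that] h_nonneg[of n A i] by (cases "i < k") auto
      then show ?thesis using apos[OF that] by (simp add: s_def)
    qed
    have slt: "s i < 1" if "i \<in> {1..n}" for i
      using eplt[OF that] apos[OF that] by (simp add: s_def)
    have sdd: "sdd n (\<lambda>i j. A i j * complex_of_real (s j))"
      unfolding sdd_def
    proof
      fix i assume i: "i \<in> {1..n}"
      have lhs: "norm (A i i * complex_of_real (s i)) = nek_h n A i + \<epsilon> i"
      proof -
        have "norm (A i i * complex_of_real (s i)) = cmod (A i i) * \<bar>s i\<bar>"
          by (simp only: norm_mult norm_of_real)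
        also have "\<dots> = cmod (A i i) * s i" using spos[OF i] by simp
        also have "\<dots> = nek_h n A i + \<epsilon> i" using apos[OF i] by (simp add: s_def)
        finally show ?thesis .
      qed
      have set: "{1..n}-{i} = {1..<i} \<union> {i<..n}" using i by auto
      have "(\<Sum>j\<in>{1..n}-{i}. norm (A i j * complex_of_real (s j))) = (\<Sum>j\<in>{1..<i} \<union> {i<..n}. cmod (A i j) * s j)"
        unfolding set
      proof (intro sum.cong refl)
        fix j assume j: "j \<in> {1..<i} \<union> {i<..n}"
        then have "s j > 0" using spos i by auto
        then show "norm (A i j * complex_of_real (s j)) = cmod (A i j) * s j"
          by (simp only: norm_mult norm_of_real abs_of_pos)
      qed
      also have "\<dots>
          = (\<Sum>j\<in>{1..<i}. cmod (A i j) * s j) + (\<Sum>j\<in>{i<..n}. cmod (A i j) * s j)"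
        by (intro sum.union_disjoint) auto
      also have "(\<Sum>j\<in>{1..<i}. cmod (A i j) * s j)
          = (\<Sum>j\<in>{1..<i}. cmod (A i j) * nek_h n A j / cmod (A j j)) + (\<Sum>j\<in>{1..<i}. cmod (A i j) * \<epsilon> j / cmod (A j j))"
        by (simp add: s_def sum.distrib[symmetric] add_divide_distrib distrib_left)
      finally have eq: "(\<Sum>j\<in>{1..n}-{i}. norm (A i j * complex_of_real (s j))) =
          (\<Sum>j\<in>{1..<i}. cmod (A i j) * nek_h n A j / cmod (A j j)) + (\<Sum>j\<in>{1..<i}. cmod (A i j) * \<epsilon> j / cmod (A j j))
          + (\<Sum>j\<in>{i<..n}. cmod (A i j) * s j)" .
      have hi: "nek_h n A i = (\<Sum>j\<in>{1..<i}. cmod (A i j) * nek_h n A j / cmod (A j j)) + (\<Sum>j\<in>{i<..n}. cmod (A i j))"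
        by (subst nek_h.simps) simp
      have Rle: "cmod (A i j) * s j \<le> cmod (A i j)" if "j \<in> {i<..n}" for j
        using slt[of j] that i by (intro mult_left_le) auto
      show "(\<Sum>j\<in>{1..n}-{i}. norm (A i j * complex_of_real (s j))) < norm (A i i * complex_of_real (s i))"
      proof (cases "i < k")
        case True
        have E0: "(\<Sum>j\<in>{1..<i}. cmod (A i j) * \<epsilon> j / cmod (A j j)) = 0"
          using H True by (intro sum.neutral) auto
        obtain j where j: "j \<in> {i<..n}" "A i j \<noteq> 0" using notP[of i] True i by auto
        have lt: "cmod (A i j) * s j < cmod (A i j)" using slt[of j] j i by auto
        have "(\<Sum>j\<in>{i<..n}. cmod (A i j) * s j) < (\<Sum>j\<in>{i<..n}. cmod (A i j))"
          by (rule sum_strict_mono_ex1) (use Rle in auto, use j lt in blast)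
        moreover have "\<epsilon> i = 0" using H True i by auto
        ultimately show ?thesis using eq lhs hi E0 by simp
      next
        case False
        have "(\<Sum>j\<in>{1..<i}. cmod (A i j) * \<epsilon> j / cmod (A j j))
            = (\<Sum>j\<in>{1..<k} \<union> {k..<i}. cmod (A i j) * \<epsilon> j / cmod (A j j))"
          using False k1 by (intro sum.cong) auto
        also have "\<dots> = (\<Sum>j\<in>{1..<k}. cmod (A i j) * \<epsilon> j / cmod (A j j)) + (\<Sum>j\<in>{k..<i}. cmod (A i j) * \<epsilon> j / cmod (A j j))"
          by (intro sum.union_disjoint) auto
        also have "(\<Sum>j\<in>{1..<k}. cmod (A i j) * \<epsilon> j / cmod (A j j)) = 0"
          using H by (intro sum.neutral) auto
        finally have "(\<Sum>j\<in>{1..<i}. cmod (A i j) * \<epsilon> j / cmod (A j j)) < \<epsilon> i"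
          using H False i by auto
        moreover have "(\<Sum>j\<in>{i<..n}. cmod (A i j) * s j) \<le> (\<Sum>j\<in>{i<..n}. cmod (A i j))"
          using Rle by (intro sum_mono) auto
        ultimately show ?thesis using eq lhs hi by simp
      qed
    qed
    show ?thesis using spos sdd by (simp add: s_def Let_def)
  qed
  show ?thesis using ex all by blast
qed

end
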